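(* Let $V$ be a Majorana representation with identity $\mathbb 1$ satisfying axiom M2'. Then the Majorana axes of $V$ (the elements of $\psi(T)$) are indecomposable idempotents.
   Context: A transposition group $(G,T)$ is a finite group $G$ with a $G$-stable set $T$ of involutions generating $G$. A Majorana representation of $(G,T)$ is a quintuple $(G,T,V,\varphi,\psi)$ where $V$ is a commutative non-associative real algebra with a (positive definite) inner product $(\,,)$, $\varphi:G\to GL(V)$ is a representation with $\varphi(G)\le \mathrm{Aut}(V)$, and $\psi:T\to V\setminus\{0\}$ is injective with $\psi(t^g)=\psi(t)^{\varphi(g)}$, such that: (M1) $(u,v\cdot w)=(u\cdot v,w)$ for all $u,v,w$; (M2) $(u\cdot u,v\cdot v)\ge (u\cdot v,u\cdot v)$ for all $u,v$; (M3) elements of $\psi(T)$ (Majorana axes) are idempotents of length $1$; (M4) each Majorana axis $a$ has $\mathrm{ad}_a:u\mapsto a\cdot u$ diagonalizable with eigenvalues in $\{0,1,\frac1{4},\frac1{32}\}$; (M5) $1$ is a simple eigenvalue of each Majorana axis; (M6) for each axis $a$ the linear map $\tau(a)$ acting as $(-1)^{32\mu}$ on the $\mu$-eigenspace of $\mathrm{ad}_a$ is an algebra automorphism; (M7) for each axis $a$ the map $\sigma(a)$ on $C_V(\tau(a))$ acting as $(-1)^{4\mu}$ on the $\mu$-eigenspaces, $\mu\ne\frac1{32}$, preserves the product of $C_V(\tau(a))$; (M8) $\tau(\psi(t))=\varphi(t)$ for all $t\in T$. Axiom M2': the Norton inequality holds for all $u,v$, with equality precisely when $\mathrm{ad}_u$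 and $\mathrm{ad}_v$ commute. An idempotent is decomposable if it can be written as a sum of at least two non-zero idempotents, and indecomposable otherwise. *)

theory Defs
  imports "HOL-Analysis.Analysis" "HOL-Algebra.Generated_Groups"
begin

definition transposition_group :: "('g, 'b) monoid_scheme \<Rightarrow> 'g set \<Rightarrow> bool" where
  "transposition_group G T \<longleftrightarrow>
     group G \<and> finite (carrier G) \<and> T \<subseteq> carrier G \<and>
     (\<forall>t\<in>T. t \<noteq> \<one>\<^bsub>G\<^esub> \<and> t \<otimes>\<^bsub>G\<^esub> t = \<one>\<^bsub>G\<^esub>) \<and>
     (\<forall>t\<in>T. \<forall>g\<in>carrier G. inv\<^bsub>G\<^esub> g \<otimes>\<^bsub>G\<^esub> t \<otimes>\<^bsub>G\<^esub> g \<in> T) \<and>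
     generate G T = carrier G"

definition eig_decomp :: "('v::real_vector \<Rightarrow> 'v \<Rightarrow> 'v) \<Rightarrow> 'v \<Rightarrow> 'v \<Rightarrow> 'v \<Rightarrow> 'v \<Rightarrow> 'v \<Rightarrow> 'v \<Rightarrow> bool" where
  "eig_decomp m a v v0 v1 v4 v32 \<longleftrightarrow>
     v = v0 + v1 + v4 + v32 \<and> m a v0 = 0 \<and> m a v1 = v1 \<and>
     m a v4 = (1/4) *\<^sub>R v4 \<and> m a v32 = (1/32) *\<^sub>R v32"

(* tau(a): acts as (-1)^(32 mu) on the mu-eigenspace *)
definition tau_map :: "('v::real_vector \<Rightarrow> 'v \<Rightarrow> 'v) \<Rightarrow> 'v \<Rightarrow> 'v \<Rightarrow> 'v" where
  "tau_map m a v = (THE w. \<exists>v0 v1 v4 v32. eig_decomp m a v v0 v1 v4 v32 \<and> w = v0 + v1 + v4 - v32)"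

(* sigma(a) on C_V(tau(a)): acts as (-1)^(4 mu) on the mu-eigenspaces, mu \<noteq> 1/32
   (only used on C_V(tau(a)), where the 1/32-component vanishes) *)
definition sigma_map :: "('v::real_vector \<Rightarrow> 'v \<Rightarrow> 'v) \<Rightarrow> 'v \<Rightarrow> 'v \<Rightarrow> 'v" where
  "sigma_map m a v = (THE w. \<exists>v0 v1 v4 v32. eig_decomp m a v v0 v1 v4 v32 \<and> w = v0 + v1 - v4 + v32)"

definition algebra_aut :: "('v::real_vector \<Rightarrow> 'v \<Rightarrow> 'v) \<Rightarrow> ('v \<Rightarrow> 'v) \<Rightarrow> bool" where
  "algebra_aut m f \<longleftrightarrow> linear f \<and> bij f \<and> (\<forall>u v. f (m u v) = m (f u) (f v))"

(* Majorana representation (G,T,V,phi,psi); V is the real inner product space 'v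
   with commutative bilinear product m. phi acts on the right: v^(phi g) = phi g v,
   so phi (g h) = phi h o phi g and t^g = g^-1 t g. *)
definition majorana_rep ::
  "('g, 'b) monoid_scheme \<Rightarrow> 'g set \<Rightarrow> ('v::real_inner \<Rightarrow> 'v \<Rightarrow> 'v) \<Rightarrow> ('g \<Rightarrow> 'v \<Rightarrow> 'v) \<Rightarrow> ('g \<Rightarrow> 'v) \<Rightarrow> bool" where
  "majorana_rep G T m \<phi> \<psi> \<longleftrightarrow>
     transposition_group G T \<and>
     bilinear m \<and> (\<forall>u v. m u v = m v u) \<and>
     (\<forall>g\<in>carrier G. algebra_aut m (\<phi> g)) \<and>
     (\<forall>g\<in>carrier G. \<forall>h\<in>carrier G. \<phi> (g \<otimes>\<^bsub>G\<^esub> h) = \<phi> h \<circ> \<phi> g) \<and>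
     inj_on \<psi> T \<and> (\<forall>t\<in>T. \<psi> t \<noteq> 0) \<and>
     (\<forall>t\<in>T. \<forall>g\<in>carrier G. \<psi> (inv\<^bsub>G\<^esub> g \<otimes>\<^bsub>G\<^esub> t \<otimes>\<^bsub>G\<^esub> g) = \<phi> g (\<psi> t)) \<and>
     \<comment> \<open>M1\<close>
     (\<forall>u v w. inner u (m v w) = inner (m u v) w) \<and>
     \<comment> \<open>M2\<close>
     (\<forall>u v. inner (m u u) (m v v) \<ge> inner (m u v) (m u v)) \<and>
     \<comment> \<open>M3\<close>
     (\<forall>t\<in>T. m (\<psi> t) (\<psi> t) = \<psi> t \<and> inner (\<psi> t) (\<psi> t) = 1) \<and>
     \<comment> \<open>M4\<close>
     (\<forall>t\<in>T. \<forall>v. \<exists>v0 v1 v4 v32. eig_decomp m (\<psi> t) v v0 v1 v4 v32) \<and>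
     \<comment> \<open>M5\<close>
     (\<forall>t\<in>T. \<forall>v. m (\<psi> t) v = v \<longrightarrow> (\<exists>c. v = c *\<^sub>R \<psi> t)) \<and>
     \<comment> \<open>M6\<close>
     (\<forall>t\<in>T. \<forall>u v. tau_map m (\<psi> t) (m u v) = m (tau_map m (\<psi> t) u) (tau_map m (\<psi> t) v)) \<and>
     \<comment> \<open>M7\<close>
     (\<forall>t\<in>T. \<forall>u v. tau_map m (\<psi> t) u = u \<longrightarrow> tau_map m (\<psi> t) v = v \<longrightarrow>
        sigma_map m (\<psi> t) (m u v) = m (sigma_map m (\<psi> t) u) (sigma_map m (\<psi> t) v)) \<and>
     \<comment> \<open>M8\<close>
     (\<forall>t\<in>T. tau_map m (\<psi> t) = \<phi> t)"

definition axiom_M2' :: "('v::real_inner \<Rightarrow> 'v \<Rightarrow> 'v) \<Rightarrow> bool" where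
  "axiom_M2' m \<longleftrightarrow>
     (\<forall>u v. inner (m u u) (m v v) \<ge> inner (m u v) (m u v) \<and>
        (inner (m u u) (m v v) = inner (m u v) (m u v) \<longleftrightarrow>
           (\<forall>w. m u (m v w) = m v (m u w))))"

definition has_identity :: "('v \<Rightarrow> 'v \<Rightarrow> 'v) \<Rightarrow> bool" where
  "has_identity m \<longleftrightarrow> (\<exists>e. \<forall>v. m e v = v)"

definition idempotent :: "('v \<Rightarrow> 'v \<Rightarrow> 'v) \<Rightarrow> 'v \<Rightarrow> bool" where
  "idempotent m x \<longleftrightarrow> m x x = x"

definition decomposable :: "('v::real_vector \<Rightarrow> 'v \<Rightarrow> 'v) \<Rightarrow> 'v \<Rightarrow> bool" where
  "decomposable m x \<longleftrightarrow> idempotent m x \<and>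
     (\<exists>xs. length xs \<ge> 2 \<and> (\<forall>y\<in>set xs. y \<noteq> 0 \<and> idempotent m y) \<and> sum_list xs = x)"

definition indecomposable_idempotent :: "('v::real_vector \<Rightarrow> 'v \<Rightarrow> 'v) \<Rightarrow> 'v \<Rightarrow> bool" where
  "indecomposable_idempotent m x \<longleftrightarrow> idempotent m x \<and> \<not> decomposable m x"

end

theory Submission
  imports Defs
begin

lemma key:
  fixes m :: "'v::real_inner \<Rightarrow> 'v \<Rightarrow> 'v" and a e :: 'v and x :: "nat \<Rightarrow> 'v"
  assumes bil: "bilinear m"
    and comm: "\<And>u v. m u v = m v u"
    and M1: "\<And>u v w. inner u (m v w) = inner (m u v) w"
    and M2: "\<And>u v. inner (m u u) (m v v) \<ge> inner (m u v) (m u v)"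
    and M5: "\<And>v. m a v = v \<Longrightarrow> \<exists>c. v = c *\<^sub>R a"
    and aa: "inner a a = 1"
    and aidem: "m a a = a"
    and ide: "\<And>v. m e v = v"
    and n2: "n \<ge> 2"
    and idem: "\<And>i. i < n \<Longrightarrow> m (x i) (x i) = x i"
    and nz: "\<And>i. i < n \<Longrightarrow> x i \<noteq> 0"
    and sum: "(\<Sum>i<n. x i) = a"
  shows False
proof -
  have linL: "linear (\<lambda>u. m u v)" for v using bil by (simp add: bilinear_def)
  have eidem: "inner e y = inner y y" if "m y y = y" for y
    using M1[of e y y] that ide by simp
  have ea: "inner e a = inner a a"
    using M1[of e a a] ide aidem by simp
  have S1: "inner e a = (\<Sum>i<n. inner (x i) (x i))"
    using sum[symmetric] by (simp add: inner_sum_right eidem idem)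
  have S2: "inner a a = (\<Sum>i<n. \<Sum>j<n. inner (x i) (x j))"
    using sum[symmetric] by (simp add: inner_sum_right inner_sum_left) (rule sum.swap)
  have nonneg: "inner (x i) (x j) \<ge> inner (m (x i) (x j)) (m (x i) (x j))" if "i<n" "j<n" for i j
    using M2[of "x i" "x j"] idem that by simp
  have split: "(\<Sum>j<n. inner (x i) (x j)) = inner (x i) (x i) + (\<Sum>j\<in>{..<n}-{i}. inner (x i) (x j))"
    if "i<n" for i
    using that by (simp add: sum.remove)
  have "(\<Sum>i<n. \<Sum>j\<in>{..<n}-{i}. inner (x i) (x j)) = 0"
    using S1 S2 ea split by (simp add: sum.distrib)
  hence Z: "\<forall>i\<in>{..<n}. (\<Sum>j\<in>{..<n}-{i}. inner (x i) (x j)) = 0"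
    by (subst (asm) sum_nonneg_eq_0_iff) (auto intro!: sum_nonneg order_trans[OF _ nonneg])
  have prod0: "m (x i) (x j) = 0" if "i<n" "j<n" "i\<noteq>j" for i j
  proof -
    have "(\<Sum>k\<in>{..<n}-{i}. inner (x i) (x k)) = 0" using Z that by auto
    hence "\<forall>k\<in>{..<n}-{i}. inner (x i) (x k) = 0"
      using that(1) by (subst (asm) sum_nonneg_eq_0_iff) (auto intro!: order_trans[OF _ nonneg])
    hence "inner (x i) (x j) = 0" using that by auto
    with nonneg[OF that(1,2)] have "inner (m (x i) (x j)) (m (x i) (x j)) \<le> 0" by simp
    thus ?thesis by (metis inner_ge_zero inner_eq_zero_iff order_antisym)
  qed
  have xa: "x i = a" if "i<n" for i
  proof -
    have "m a (x i) = (\<Sum>j<n. m (x j) (x i))"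
      using sum[symmetric] linear_sum[OF linL, of "\<lambda>j. x j" "{..<n}" "x i"] by simp
    also have "\<dots> = m (x i) (x i) + (\<Sum>j\<in>{..<n}-{i}. m (x j) (x i))"
      using that by (simp add: sum.remove)
    also have "(\<Sum>j\<in>{..<n}-{i}. m (x j) (x i)) = 0"
      using prod0 that by (intro sum.neutral) auto
    finally have "m a (x i) = x i" using idem that by simp
    then obtain c where c: "x i = c *\<^sub>R a" using M5 by blast
    have a0: "a \<noteq> 0" using aa by auto
    have "m (x i) (x i) = (c*c) *\<^sub>R m a a"
      using c bil by (simp add: bilinear_lmul bilinear_rmul)
    moreover note aidem
    ultimately have "(c*c) *\<^sub>R a = c *\<^sub>R a" using idem[OF that] c by (simp only:)
    hence "c*c = c" using a0 by (metis scaleR_cancel_right)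
    hence "c*(c-1) = 0" by (simp add: algebra_simps)
    hence "c = 0 \<or> c = 1" by simp
    thus ?thesis using c nz that by auto
  qed
  have "inner e a = real n" using S1 xa aa by simp
  with ea aa n2 show False by simp
qed

theorem mainTheorem6:
  fixes G :: "('g, 'b) monoid_scheme" and T :: "'g set"
    and m :: "'v::real_inner \<Rightarrow> 'v \<Rightarrow> 'v" and \<phi> :: "'g \<Rightarrow> 'v \<Rightarrow> 'v" and \<psi> :: "'g \<Rightarrow> 'v"
  assumes "majorana_rep G T m \<phi> \<psi>"
    and "has_identity m"
    and "axiom_M2' m"
  shows "\<forall>t\<in>T. indecomposable_idempotent m (\<psi> t)"
proof
  fix t assume t: "t \<in> T"
  note R = assms(1)[unfolded majorana_rep_def]
  obtain e where e: "\<And>v. m e v = v" using assms(2) unfolding has_identity_def by blast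
  have id: "idempotent m (\<psi> t)" using R t by (simp add: idempotent_def)
  have "\<not> decomposable m (\<psi> t)"
  proof
    assume "decomposable m (\<psi> t)"
    then obtain xs where xs: "length xs \<ge> 2" "\<forall>y\<in>set xs. y \<noteq> 0 \<and> idempotent m y" "sum_list xs = \<psi> t"
      unfolding decomposable_def by blast
    show False
    proof (rule key[of m "\<psi> t" e "length xs" "\<lambda>i. xs ! i"])
      show "bilinear m" using R by simp
      show "\<And>u v. m u v = m v u" using R by simp
      show "\<And>u v w. inner u (m v w) = inner (m u v) w" using R by simp
      have M2R: "\<forall>u v. inner (m u u) (m v v) \<ge> inner (m u v) (m u v)" using R by (elim conjE) assumption
      show "\<And>u v. inner (m u u) (m v v) \<ge> inner (m u v) (m u v)" using M2R by blast
      show "m (\<psi> t) (\<psi> t) = \<psi> t" using R t by simp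
      show "\<And>v. m (\<psi> t) v = v \<Longrightarrow> \<exists>c. v = c *\<^sub>R \<psi> t" using R t by simp
      show "inner (\<psi> t) (\<psi> t) = 1" using R t by simp
      show "\<And>v. m e v = v" by (rule e)
      show "length xs \<ge> 2" by (rule xs(1))
      show "\<And>i. i < length xs \<Longrightarrow> m (xs!i) (xs!i) = xs!i"
        using xs(2) by (auto simp: idempotent_def)
      show "\<And>i. i < length xs \<Longrightarrow> xs!i \<noteq> 0" using xs(2) by auto
      show "(\<Sum>i<length xs. xs!i) = \<psi> t" using xs(3) by (simp add: sum_list_sum_nth atLeast0LessThan)
    qed
  qed
  with id show "indecomposable_idempotent m (\<psi> t)" by (simp add: indecomposable_idempotent_def)
qed

end
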